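(* Let $1\le d\le D$ be integers, let $k$ be a field with $|k|\ge D+1$, let $A$ be a $k$-algebra and let $a_1,\ldots,a_m\in A$. Assume that for all $\alpha_1,\ldots,\alpha_m\in k$ the element $\alpha_1a_1+\cdots+\alpha_ma_m$ is algebraic over $k$ of degree at most $d$. Then $P_D(a_1,\ldots,a_m)\subseteq P_{\le d-1}(a_1,\ldots,a_m)$.
   Context: Algebras are associative with unit. For nonnegative integers $i_1,\ldots,i_m$, $p_{i_1,\ldots,i_m}(x_1,\ldots,x_m)$ is the sum of all distinct noncommutative monomials with exactly $i_j$ occurrences of $x_j$ for each $j$ ($p_{0,\ldots,0}=1$); $p_{i_1,\ldots,i_m}(a_1,\ldots,a_m)$ is its evaluation at $x_j=a_j$. $P_n(a_1,\ldots,a_m)=\operatorname{span}_k\{p_{i_1,\ldots,i_m}(a_1,\ldots,a_m)\mid i_1+\cdots+i_m=n\}$ and $P_{\le r}(a_1,\ldots,a_m)=\sum_{n=0}^rP_n(a_1,\ldots,a_m)$. An element $u$ is algebraic of degree at most $d$ if it is a root of a nonzero polynomial in $k[t]$ of degree at most $d$. *)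

theory Defs
  imports Main "HOL-Computational_Algebra.Polynomial"
begin

definition is_algebra :: "('k::field \<Rightarrow> 'b::ring_1 \<Rightarrow> 'b) \<Rightarrow> bool" where
  "is_algebra scale \<longleftrightarrow> vector_space scale \<and>
     (\<forall>c x y. scale c (x * y) = scale c x * y \<and> scale c (x * y) = x * scale c y)"

definition alg_eval :: "('k::field \<Rightarrow> 'b::ring_1 \<Rightarrow> 'b) \<Rightarrow> 'k poly \<Rightarrow> 'b \<Rightarrow> 'b" where
  "alg_eval scale p u = (\<Sum>j\<le>degree p. scale (coeff p j) (u ^ j))"

definition algebraic_deg_le :: "('k::field \<Rightarrow> 'b::ring_1 \<Rightarrow> 'b) \<Rightarrow> nat \<Rightarrow> 'b \<Rightarrow> bool" where
  "algebraic_deg_le scale d u \<longleftrightarrow> (\<exists>p. p \<noteq> 0 \<and> degree p \<le> d \<and> alg_eval scale p u = 0)"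

text \<open>Noncommutative monomials in x_0..x_{m-1} are words (lists) over {..<m};
the word w evaluates to the product of a (w!0) * a (w!1) * ... .
p_i(a) is the sum over all distinct words with exactly i j occurrences of x_j (j<m).\<close>
definition words :: "nat \<Rightarrow> (nat \<Rightarrow> nat) \<Rightarrow> nat list set" where
  "words m i = {w. set w \<subseteq> {..<m} \<and> (\<forall>j<m. count_list w j = i j)}"

definition pnc :: "nat \<Rightarrow> (nat \<Rightarrow> nat) \<Rightarrow> (nat \<Rightarrow> 'b::ring_1) \<Rightarrow> 'b" where
  "pnc m i a = (\<Sum>w\<in>words m i. prod_list (map a w))"

definition Pn :: "('k::field \<Rightarrow> 'b::ring_1 \<Rightarrow> 'b) \<Rightarrow> nat \<Rightarrow> (nat \<Rightarrow> 'b) \<Rightarrow> nat \<Rightarrow> 'b set" where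
  "Pn scale m a n = module.span scale {pnc m i a | i. (\<Sum>j<m. i j) = n}"

definition Ple :: "('k::field \<Rightarrow> 'b::ring_1 \<Rightarrow> 'b) \<Rightarrow> nat \<Rightarrow> (nat \<Rightarrow> 'b) \<Rightarrow> nat \<Rightarrow> 'b set" where
  "Ple scale m a r = {x. \<exists>f. (\<forall>n\<le>r. f n \<in> Pn scale m a n) \<and> x = (\<Sum>n\<le>r. f n)}"

end

theory Submission
  imports Defs
begin

lemma interp_coeffs:
  fixes S :: "'k::field set"
  assumes fin: "finite S" and cS: "card S = Suc D" and eD: "e \<le> D"
  shows "\<exists>c. \<forall>e'\<le>D. (\<Sum>s\<in>S. c s * s ^ e') = (if e' = e then 1 else 0)"
proof -
  define L where "L s = smult (1 / (\<Prod>s'\<in>S-{s}. (s - s'))) (\<Prod>s'\<in>S-{s}. [:-s', 1:])" for s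
  have polyL: "poly (L s) t = (if t = s then 1 else 0)" if "s \<in> S" "t \<in> S" for s t
  proof (cases "t = s")
    case True
    have "(\<Prod>s'\<in>S-{s}. (s - s')) \<noteq> 0" using fin by (simp add: prod_zero_iff)
    then show ?thesis using True by (simp add: L_def poly_prod)
  next
    case False
    have "(\<Prod>s'\<in>S-{s}. (t - s')) = 0" using fin that False
      by (subst prod_zero_iff) auto
    then show ?thesis using False by (simp add: L_def poly_prod)
  qed
  have degL: "degree (L s) \<le> D" if "s \<in> S" for s
  proof -
    have "degree (\<Prod>s'\<in>S-{s}. [:-s', 1:]) \<le> sum (degree \<circ> (\<lambda>s'. [:-s', 1:])) (S - {s})"
      using fin by (intro degree_prod_sum_le) auto
    also have "\<dots> = card (S - {s})" by simp
    also have "\<dots> = D" using cS fin that by simp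
    finally show ?thesis by (simp add: L_def)
  qed
  show ?thesis
  proof (intro exI allI impI)
    fix e' assume e': "e' \<le> D"
    have eq: "monom 1 e' = (\<Sum>s\<in>S. smult (s ^ e') (L s))"
    proof (rule poly_eqI_degree[of S])
      fix t assume t: "t \<in> S"
      have "poly (\<Sum>s\<in>S. smult (s ^ e') (L s)) t = (\<Sum>s\<in>S. s ^ e' * (if t = s then 1 else 0))"
        by (simp add: poly_sum polyL t)
      also have "\<dots> = t ^ e'" using fin t by (simp add: if_distrib[of "(*) _"] sum.delta cong: if_cong)
      finally show "poly (monom 1 e') t = poly (\<Sum>s\<in>S. smult (s ^ e') (L s)) t"
        by (simp add: poly_monom)
    next
      show "degree (monom (1::'k) e') < card S" using e' cS by (simp add: degree_monom_eq)
    next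
      have "degree (\<Sum>s\<in>S. smult (s ^ e') (L s)) \<le> D"
        using fin by (intro degree_sum_le) (auto intro: order.trans[OF degree_smult_le] degL)
      then show "degree (\<Sum>s\<in>S. smult (s ^ e') (L s)) < card S" using cS by simp
    qed
    have "coeff (monom 1 e') e = (\<Sum>s\<in>S. s ^ e' * coeff (L s) e)"
      by (subst eq) (simp add: coeff_sum)
    then show "(\<Sum>s\<in>S. coeff (L s) e * s ^ e') = (if e' = e then 1 else 0)"
      by (simp add: coeff_monom mult.commute)
  qed
qed

definition Iset :: "nat \<Rightarrow> nat \<Rightarrow> (nat \<Rightarrow> nat) set" where
  "Iset D m = {i. (\<forall>j. i j \<le> D) \<and> (\<forall>j\<ge>m. i j = 0)}"

definition mon :: "(nat \<Rightarrow> 'k::comm_semiring_1) \<Rightarrow> (nat \<Rightarrow> nat) \<Rightarrow> nat \<Rightarrow> 'k" where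
  "mon \<alpha> i m = (\<Prod>j<m. \<alpha> j ^ i j)"

lemma Iset_0: "Iset D 0 = {\<lambda>_. 0}"
  by (auto simp: Iset_def)

lemma Iset_Suc: "Iset D (Suc m) = (\<lambda>(i,e). i(m:=e)) ` (Iset D m \<times> {..D})"
proof (intro equalityI subsetI)
  fix i assume i: "i \<in> Iset D (Suc m)"
  then have "(i(m:=0), i m) \<in> Iset D m \<times> {..D}"
    by (auto simp: Iset_def)
  moreover have "i = (i(m:=0))(m := i m)" by simp
  ultimately show "i \<in> (\<lambda>(i,e). i(m:=e)) ` (Iset D m \<times> {..D})"
    by (intro image_eqI[where x="(i(m:=0), i m)"]) auto
qed (auto simp: Iset_def)

lemma Iset_inj: "inj_on (\<lambda>(i,e). i(m:=e)) (Iset D m \<times> {..D})"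
proof (rule inj_onI, clarsimp)
  fix i e i' e' assume "i \<in> Iset D m" "i' \<in> Iset D m" "i(m := e) = i'(m := e')"
  then show "i = i' \<and> e = e'"
    by (auto simp: Iset_def fun_eq_iff) (metis fun_upd_apply order_refl)+
qed

lemma finite_Iset: "finite (Iset D m)"
  by (induction m) (auto simp: Iset_0 Iset_Suc)

lemma mon_upd: "i \<in> Iset D m \<Longrightarrow> mon \<alpha> (i(m:=e)) (Suc m) = mon \<alpha> i m * \<alpha> m ^ e"
  by (simp add: mon_def)

lemma mon_upd_alpha: "mon (\<alpha>(m:=t)) i m = mon \<alpha> i m"
  by (simp add: mon_def)

locale kalg = vector_space scale for scale :: "'k::field \<Rightarrow> 'b::ring_1 \<Rightarrow> 'b" +
  assumes ml: "scale c (x * y) = scale c x * y" and mr: "scale c (x * y) = x * scale c y"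
begin

lemma one_var:
  assumes W: "subspace W" and fin: "finite S" and cS: "card S = Suc D"
    and h: "\<And>t. t \<in> S \<Longrightarrow> (\<Sum>e\<le>D. scale (t ^ e) (w e)) \<in> W"
    and eD: "e \<le> D"
  shows "w e \<in> W"
proof -
  obtain c where c: "\<And>e'. e' \<le> D \<Longrightarrow> (\<Sum>s\<in>S. c s * s ^ e') = (if e' = e then 1 else 0)"
    using interp_coeffs[OF fin cS eD] by blast
  have "(\<Sum>s\<in>S. scale (c s) (\<Sum>e'\<le>D. scale (s ^ e') (w e'))) \<in> W"
    using h by (intro subspace_sum[OF W]) (simp add: subspace_scale[OF W])
  also have "(\<Sum>s\<in>S. scale (c s) (\<Sum>e'\<le>D. scale (s ^ e') (w e')))
      = (\<Sum>e'\<le>D. scale (\<Sum>s\<in>S. c s * s ^ e') (w e'))"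
    by (simp add: scale_sum_right scale_sum_left sum.swap[of _ S])
  also have "\<dots> = (\<Sum>e'\<le>D. scale (if e' = e then 1 else 0) (w e'))"
    by (intro sum.cong) (auto simp: c)
  also have "\<dots> = w e" using eD
    by (simp add: if_distrib[of "\<lambda>x. scale x _"] sum.delta cong: if_cong)
  finally show ?thesis .
qed

lemma multi_var:
  assumes W: "subspace W" and fin: "finite (S::'k set)" and cS: "card S = Suc D"
  shows "(\<forall>\<alpha>. (\<Sum>i\<in>Iset D m. scale (mon \<alpha> i m) (v i)) \<in> W) \<Longrightarrow> i \<in> Iset D m \<Longrightarrow> v i \<in> W"
proof (induction m arbitrary: v i)
  case 0
  then show ?case using "0.prems"(1)[rule_format, of undefined] by (simp add: Iset_0 mon_def)
next
  case (Suc m)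
  define w where "w e \<alpha> = (\<Sum>i\<in>Iset D m. scale (mon \<alpha> i m) (v (i(m:=e))))" for e \<alpha>
  have expand: "(\<Sum>i\<in>Iset D (Suc m). scale (mon \<alpha> i (Suc m)) (v i))
      = (\<Sum>e\<le>D. scale (\<alpha> m ^ e) (w e \<alpha>))" for \<alpha>
  proof -
    have "(\<Sum>i\<in>Iset D (Suc m). scale (mon \<alpha> i (Suc m)) (v i))
        = (\<Sum>(i,e)\<in>Iset D m \<times> {..D}. scale (mon \<alpha> (i(m:=e)) (Suc m)) (v (i(m:=e))))"
      unfolding Iset_Suc by (subst sum.reindex[OF Iset_inj]) (simp add: case_prod_unfold)
    also have "\<dots> = (\<Sum>(i,e)\<in>Iset D m \<times> {..D}. scale (\<alpha> m ^ e) (scale (mon \<alpha> i m) (v (i(m:=e)))))"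
      by (intro sum.cong) (auto simp: mon_upd mult.commute)
    also have "\<dots> = (\<Sum>i\<in>Iset D m. \<Sum>e\<le>D. scale (\<alpha> m ^ e) (scale (mon \<alpha> i m) (v (i(m:=e)))))"
      by (subst sum.cartesian_product[symmetric]) simp
    also have "\<dots> = (\<Sum>e\<le>D. scale (\<alpha> m ^ e) (w e \<alpha>))"
      by (subst sum.swap) (simp add: w_def scale_sum_right)
    finally show ?thesis .
  qed
  have wW: "w e \<alpha> \<in> W" if "e \<le> D" for e \<alpha>
  proof -
    have "(\<Sum>e\<le>D. scale (t ^ e) (w e \<alpha>)) \<in> W" if "t \<in> S" for t
    proof -
    have "(\<Sum>i\<in>Iset D (Suc m). scale (mon (\<alpha>(m:=t)) i (Suc m)) (v i)) \<in> W"
      using Suc.prems(1) by blast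
    also have "(\<Sum>i\<in>Iset D (Suc m). scale (mon (\<alpha>(m:=t)) i (Suc m)) (v i))
       = (\<Sum>e\<le>D. scale (t ^ e) (w e \<alpha>))"
      by (simp add: expand w_def mon_upd_alpha)
    finally show ?thesis .
    qed
    then show ?thesis using one_var[OF W fin cS, of "\<lambda>e. w e \<alpha>"] that by blast
  qed
  have all: "v (i(m:=e)) \<in> W" if "i \<in> Iset D m" "e \<le> D" for i e
    using Suc.IH[of "\<lambda>i. v (i(m:=e))" i] wW[OF that(2)] that(1) unfolding w_def by blast
  obtain i0 e0 where "(i0, e0) \<in> Iset D m \<times> {..D}" "i = i0(m:=e0)"
    using Suc.prems(2) unfolding Iset_Suc by auto
  then show ?case using all by (metis SigmaE2 atMost_iff)
qed

end

definition Wd :: "nat \<Rightarrow> nat \<Rightarrow> nat list set" where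
  "Wd m n = {w. set w \<subseteq> {..<m} \<and> length w = n}"

definition Jset :: "nat \<Rightarrow> nat \<Rightarrow> (nat \<Rightarrow> nat) set" where
  "Jset m n = {i. (\<Sum>j<m. i j) = n \<and> (\<forall>j\<ge>m. i j = 0)}"

definition cnt :: "nat \<Rightarrow> nat list \<Rightarrow> nat \<Rightarrow> nat" where
  "cnt m w = (\<lambda>j. if j < m then count_list w j else 0)"

lemma finite_Wd: "finite (Wd m n)"
  unfolding Wd_def by (rule finite_lists_length_eq) simp

lemma Wd_0: "Wd m 0 = {[]}" by (auto simp: Wd_def)

lemma Wd_Suc: "Wd m (Suc n) = (\<lambda>(x,w). x # w) ` ({..<m} \<times> Wd m n)"
proof (intro equalityI subsetI)
  fix w assume "w \<in> Wd m (Suc n)"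
  then obtain x w' where "w = x # w'" "x < m" "w' \<in> Wd m n"
    by (cases w) (auto simp: Wd_def)
  then show "w \<in> (\<lambda>(x,w). x # w) ` ({..<m} \<times> Wd m n)"
    by (intro image_eqI[where x="(x, w')"]) auto
qed (auto simp: Wd_def)

lemma Wd_inj: "inj_on (\<lambda>(x,w). x # w) A"
  by (rule inj_onI) auto

lemma Jset_sub: "Jset m n \<subseteq> Iset n m"
proof
  fix i assume i: "i \<in> Jset m n"
  have "i j \<le> n" for j
  proof (cases "j < m")
    case True
    have "i j \<le> (\<Sum>j<m. i j)" using True by (intro member_le_sum) auto
    then show ?thesis using i by (simp add: Jset_def)
  next
    case False then show ?thesis using i by (simp add: Jset_def)
  qed
  then show "i \<in> Iset n m" using i by (simp add: Jset_def Iset_def)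
qed

lemma finite_Jset: "finite (Jset m n)"
  using finite_subset[OF Jset_sub finite_Iset] .

lemma length_count: "set w \<subseteq> X \<Longrightarrow> finite X \<Longrightarrow> length w = (\<Sum>x\<in>X. count_list w x)"
proof (induction w)
  case (Cons y w)
  then have "y \<in> X" by simp
  have "(\<Sum>x\<in>X. count_list (y # w) x) = (\<Sum>x\<in>X. count_list w x + (if y = x then 1 else 0))"
    by (intro sum.cong) auto
  also have "\<dots> = (\<Sum>x\<in>X. count_list w x) + 1"
    using Cons.prems \<open>y \<in> X\<close> by (simp add: sum.distrib sum.delta)
  finally show ?case using Cons by simp
qed simp

lemma prod_count:
  fixes \<alpha> :: "nat \<Rightarrow> 'k::comm_semiring_1"
  shows "set w \<subseteq> {..<m} \<Longrightarrow> prod_list (map \<alpha> w) = (\<Prod>j<m. \<alpha> j ^ count_list w j)"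
proof (induction w)
  case (Cons y w)
  then have y: "y < m" by simp
  have "(\<Prod>j<m. \<alpha> j ^ count_list (y # w) j) = (\<Prod>j<m. \<alpha> j ^ count_list w j * (if y = j then \<alpha> j else 1))"
    by (intro prod.cong) (auto simp: power_add mult.commute)
  also have "\<dots> = (\<Prod>j<m. \<alpha> j ^ count_list w j) * \<alpha> y"
    using y by (simp add: prod.distrib prod.delta)
  finally show ?case using Cons by (simp add: mult.commute)
qed simp

lemma words_eq: "i \<in> Jset m n \<Longrightarrow> {w \<in> Wd m n. cnt m w = i} = words m i"
proof (intro equalityI subsetI)
  fix w assume i: "i \<in> Jset m n" and w: "w \<in> words m i"
  have "length w = (\<Sum>j<m. count_list w j)"
    using w by (intro length_count) (auto simp: words_def)
  also have "\<dots> = (\<Sum>j<m. i j)" using w by (intro sum.cong) (auto simp: words_def)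
  finally have "length w = n" using i by (simp add: Jset_def)
  moreover have "cnt m w = i" using w i by (auto simp: cnt_def words_def Jset_def fun_eq_iff)
  ultimately show "w \<in> {w \<in> Wd m n. cnt m w = i}" using w by (auto simp: Wd_def words_def)
qed (auto simp: Wd_def words_def cnt_def)

lemma (in kalg) scale_mult: "scale c x * scale d y = scale (c * d) (x * y)"
  by (metis ml mr scale_scale)

lemma (in kalg) power_expand:
  "(\<Sum>j<m. scale (\<alpha> j) (a j)) ^ n = (\<Sum>w\<in>Wd m n. scale (prod_list (map \<alpha> w)) (prod_list (map a w)))"
proof (induction n)
  case 0
  then show ?case by (simp add: Wd_0)
next
  case (Suc n)
  have "(\<Sum>j<m. scale (\<alpha> j) (a j)) ^ Suc n
     = (\<Sum>j<m. scale (\<alpha> j) (a j)) * (\<Sum>w\<in>Wd m n. scale (prod_list (map \<alpha> w)) (prod_list (map a w)))"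
    by (simp add: Suc)
  also have "\<dots> = (\<Sum>j<m. \<Sum>w\<in>Wd m n. scale (\<alpha> j * prod_list (map \<alpha> w)) (a j * prod_list (map a w)))"
    by (simp add: sum_distrib_left sum_distrib_right scale_mult) (rule sum.swap)
  also have "\<dots> = (\<Sum>(j,w)\<in>{..<m} \<times> Wd m n. scale (prod_list (map \<alpha> (j # w))) (prod_list (map a (j # w))))"
    by (subst sum.cartesian_product[symmetric]) simp
  also have "\<dots> = (\<Sum>w\<in>Wd m (Suc n). scale (prod_list (map \<alpha> w)) (prod_list (map a w)))"
    unfolding Wd_Suc by (subst sum.reindex[OF Wd_inj]) (simp add: case_prod_unfold)
  finally show ?case .
qed

lemma (in kalg) power_pnc:
  "(\<Sum>j<m. scale (\<alpha> j) (a j)) ^ n = (\<Sum>i\<in>Jset m n. scale (mon \<alpha> i m) (pnc m i a))"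
proof -
  have img: "cnt m ` Wd m n \<subseteq> Jset m n"
  proof
    fix i assume "i \<in> cnt m ` Wd m n"
    then obtain w where w: "w \<in> Wd m n" "i = cnt m w" by auto
    have "length w = (\<Sum>j<m. count_list w j)"
      using w by (intro length_count) (auto simp: Wd_def)
    then show "i \<in> Jset m n" using w by (simp add: Jset_def cnt_def Wd_def)
  qed
  have "(\<Sum>j<m. scale (\<alpha> j) (a j)) ^ n
     = (\<Sum>i\<in>Jset m n. \<Sum>w\<in>{w \<in> Wd m n. cnt m w = i}. scale (prod_list (map \<alpha> w)) (prod_list (map a w)))"
    unfolding power_expand by (rule sum.group[OF finite_Wd finite_Jset img, symmetric])
  also have "\<dots> = (\<Sum>i\<in>Jset m n. \<Sum>w\<in>words m i. scale (mon \<alpha> i m) (prod_list (map a w)))"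
  proof (intro sum.cong refl)
    fix i w assume i: "i \<in> Jset m n" and w': "w \<in> words m i"
    then show "scale (prod_list (map \<alpha> w)) (prod_list (map a w)) = scale (mon \<alpha> i m) (prod_list (map a w))"
      using prod_count[of w m \<alpha>] by (simp add: words_def mon_def)
  qed (use words_eq in blast)
  also have "\<dots> = (\<Sum>i\<in>Jset m n. scale (mon \<alpha> i m) (pnc m i a))"
    by (simp add: pnc_def scale_sum_right)
  finally show ?thesis .
qed


context kalg
begin

lemma Ple_subspace: "subspace (Ple scale m a r)"
proof (rule subspaceI)
  show "0 \<in> Ple scale m a r"
    unfolding Ple_def Pn_def by (intro CollectI exI[where x="\<lambda>_. 0"]) (simp add: span_zero)
next
  fix x y assume "x \<in> Ple scale m a r" "y \<in> Ple scale m a r"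
  then obtain f g where f: "\<forall>n\<le>r. f n \<in> Pn scale m a n" "x = (\<Sum>n\<le>r. f n)"
    and g: "\<forall>n\<le>r. g n \<in> Pn scale m a n" "y = (\<Sum>n\<le>r. g n)"
    unfolding Ple_def by auto
  show "x + y \<in> Ple scale m a r"
    unfolding Ple_def using f g
    by (intro CollectI exI[where x="\<lambda>n. f n + g n"]) (auto simp: Pn_def span_add sum.distrib)
next
  fix c x assume "x \<in> Ple scale m a r"
  then obtain f where f: "\<forall>n\<le>r. f n \<in> Pn scale m a n" "x = (\<Sum>n\<le>r. f n)"
    unfolding Ple_def by auto
  show "scale c x \<in> Ple scale m a r"
    unfolding Ple_def using f
    by (intro CollectI exI[where x="\<lambda>n. scale c (f n)"]) (auto simp: Pn_def span_scale scale_sum_right)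
qed

lemma Pn_sub_Ple: "n \<le> r \<Longrightarrow> Pn scale m a n \<subseteq> Ple scale m a r"
proof
  fix x assume n: "n \<le> r" and x: "x \<in> Pn scale m a n"
  show "x \<in> Ple scale m a r"
    unfolding Ple_def
  proof (intro CollectI exI[where x="\<lambda>k. if k = n then x else 0"] conjI allI impI)
    fix k assume "k \<le> r" then show "(if k = n then x else 0) \<in> Pn scale m a k"
      using x by (auto simp: Pn_def span_zero)
  qed (use n in \<open>simp add: sum.delta\<close>)
qed

lemma power_in_Pn: "(\<Sum>j<m. scale (\<alpha> j) (a j)) ^ n \<in> Pn scale m a n"
  unfolding power_pnc Pn_def
  by (intro span_sum span_scale span_base) (auto simp: Jset_def)

lemma main:
  assumes d1: "1 \<le> d" and dD: "d \<le> D" and fin: "finite (S::'k set)" and cS: "card S = Suc D"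
    and alg: "\<forall>\<alpha> :: nat \<Rightarrow> 'k. algebraic_deg_le scale d (\<Sum>j<m. scale (\<alpha> j) (a j))"
  shows "Pn scale m a D \<subseteq> Ple scale m a (d - 1)"
proof -
  define W where "W = Ple scale m a (d - 1)"
  have W: "subspace W" unfolding W_def by (rule Ple_subspace)
  have powW: "(\<Sum>j<m. scale (\<alpha> j) (a j)) ^ n \<in> W" if "n < d" for n \<alpha>
  proof -
    have "n \<le> d - 1" using that by simp
    then show ?thesis using Pn_sub_Ple[of n "d - 1" m a] power_in_Pn[where \<alpha>=\<alpha> and n=n and m=m and a=a]
      unfolding W_def by blast
  qed
  have uD: "(\<Sum>j<m. scale (\<alpha> j) (a j)) ^ D \<in> W" for \<alpha>
  proof -
    define u where "u = (\<Sum>j<m. scale (\<alpha> j) (a j))"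
    obtain p where p: "p \<noteq> 0" "degree p \<le> d" "alg_eval scale p u = 0"
      using alg unfolding algebraic_deg_le_def u_def by blast
    define e where "e = degree p"
    define c where "c = coeff p e"
    have c: "c \<noteq> 0" using p(1) by (simp add: c_def e_def)
    define T where "T = span {u ^ j | j. j < e}"
    have "0 = (\<Sum>j<Suc e. scale (coeff p j) (u ^ j))"
      using p(3) by (simp add: alg_eval_def e_def lessThan_Suc_atMost)
    also have "\<dots> = (\<Sum>j<e. scale (coeff p j) (u ^ j)) + scale c (u ^ e)"
      by (simp add: c_def)
    finally have "scale c (u ^ e) = - (\<Sum>j<e. scale (coeff p j) (u ^ j))"
      by (simp add: eq_neg_iff_add_eq_0 add.commute)
    then have "scale (1 / c) (scale c (u ^ e)) = scale (1 / c) (- (\<Sum>j<e. scale (coeff p j) (u ^ j)))"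
      by simp
    then have "u ^ e = scale (1 / c) (- (\<Sum>j<e. scale (coeff p j) (u ^ j)))"
      using c by simp
    then have ue: "u ^ e \<in> T" unfolding T_def
      by (simp only:) (intro span_scale span_neg span_sum span_base, auto)
    have mulT: "u * x \<in> T" if "x \<in> T" for x
      using that[unfolded T_def]
    proof (induction rule: span_induct_alt)
      case base then show ?case by (simp add: T_def span_zero)
    next
      case (step c' x y)
      then obtain j where j: "x = u ^ j" "j < e" by auto
      have ux: "u * x \<in> T"
      proof (cases "Suc j < e")
        case True then show ?thesis using j by (auto simp: T_def intro!: span_base exI[where x="Suc j"])
      next
        case False then have "Suc j = e" using j by simp
        then show ?thesis using ue j by (metis power_Suc)
      qed
      have "u * (scale c' x + y) = scale c' (u * x) + u * y"
        by (simp add: distrib_left mr)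
      then show ?case using ux step.IH unfolding T_def by (simp add: span_add span_scale)
    qed
    have allT: "u ^ n \<in> T" for n
    proof (induction n)
      case 0 then show ?case
      proof (cases "0 < e")
        case True then show ?thesis by (auto simp: T_def intro!: span_base exI[where x=0])
      next
        case False then show ?thesis using ue by simp
      qed
    next
      case (Suc n) then show ?case using mulT by simp
    qed
    have "T \<subseteq> W" unfolding T_def
    proof (rule span_minimal[OF _ W])
      show "{u ^ j | j. j < e} \<subseteq> W"
      proof safe
        fix j assume "j < e" then show "u ^ j \<in> W" using powW p(2) unfolding e_def u_def by simp
      qed
    qed
    then show ?thesis using allT[of D] unfolding u_def by blast
  qed
  define v where "v i = (if i \<in> Jset m D then pnc m i a else 0)" for i
  have vsum: "(\<forall>\<alpha>. (\<Sum>i\<in>Iset D m. scale (mon \<alpha> i m) (v i)) \<in> W)"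
  proof
    fix \<alpha>
    have "(\<Sum>i\<in>Iset D m. scale (mon \<alpha> i m) (v i)) = (\<Sum>i\<in>Jset m D. scale (mon \<alpha> i m) (v i))"
      by (rule sum.mono_neutral_right[OF finite_Iset Jset_sub]) (auto simp: v_def)
    also have "\<dots> = (\<Sum>j<m. scale (\<alpha> j) (a j)) ^ D"
      unfolding power_pnc by (intro sum.cong) (auto simp: v_def)
    finally show "(\<Sum>i\<in>Iset D m. scale (mon \<alpha> i m) (v i)) \<in> W" using uD by simp
  qed
  have pncW: "pnc m i a \<in> W" if "i \<in> Jset m D" for i
    using multi_var[OF W fin cS vsum, of i] that Jset_sub v_def by auto
  have "Pn scale m a D \<subseteq> W" unfolding Pn_def
  proof (rule span_minimal[OF _ W], safe)
    fix i :: "nat \<Rightarrow> nat" assume i: "D = (\<Sum>j<m. i j)"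
    define i' where "i' j = (if j < m then i j else 0)" for j
    have "i' \<in> Jset m D" using i by (simp add: Jset_def i'_def)
    moreover have "words m i' = words m i" by (auto simp: words_def i'_def)
    ultimately show "pnc m i a \<in> W" using pncW unfolding pnc_def by metis
  qed
  then show ?thesis unfolding W_def .
qed

end

theorem lemma3p2:
  fixes scale :: "'k::field \<Rightarrow> 'b::ring_1 \<Rightarrow> 'b"
    and a :: "nat \<Rightarrow> 'b" and m d D :: nat
  assumes "is_algebra scale"
    and "1 \<le> d" and "d \<le> D"
    and "infinite (UNIV :: 'k set) \<or> D + 1 \<le> card (UNIV :: 'k set)"
    and "\<forall>\<alpha> :: nat \<Rightarrow> 'k. algebraic_deg_le scale d (\<Sum>j<m. scale (\<alpha> j) (a j))"
  shows "Pn scale m a D \<subseteq> Ple scale m a (d - 1)"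
proof -
  have va: "vector_space scale" and cm: "\<forall>c x y. scale c (x * y) = scale c x * y \<and> scale c (x * y) = x * scale c y"
    using assms(1) unfolding is_algebra_def by blast+
  interpret kalg scale
    by (intro kalg.intro va kalg_axioms.intro) (use cm in blast)+
  obtain S :: "'k set" where S: "finite S" "card S = Suc D"
  proof (cases "infinite (UNIV :: 'k set)")
    case True
    then show ?thesis using infinite_arbitrarily_large[OF True, of "Suc D"] that by blast
  next
    case False
    then have "Suc D \<le> card (UNIV :: 'k set)" using assms(4) by simp
    then show ?thesis using obtain_subset_with_card_n that by metis
  qed
  show ?thesis by (rule main[OF assms(2,3) S assms(5)])
qed

end
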